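(* Let $n\ge2$, $a\in H_n\rtimes S_n$, $g\in C_{H_n}(a)$ and $i\in I(a)$. If $t_i(g)\neq0$, then $t_j(g)\neq0$ for all $j\in I(a)$ with $[j]_a\sim_a[i]_a$.
   Context: $\mathbb{N}=\{1,2,\dots\}$, $X_n=\{1,\dots,n\}\times\mathbb{N}$, permutations act on the right. $H_n$ is the group of bijections $g$ of $X_n$ with $z_i(g)\in\mathbb{N}$, $t_i(g)\in\mathbb{Z}$ such that $(i,m)g=(i,m+t_i(g))$ for all $m\ge z_i(g)$. $S_n$ acts by $(i,m)\sigma=(i\sigma,m)$; $H_n\rtimes S_n\le\mathrm{Sym}(X_n)$ is generated by $H_n$ and these; each $a$ is uniquely $\omega_a\sigma_a$ with $\omega_a\in H_n$, $\sigma_a\in S_n$, $t_i(a):=t_i(\omega_a)$. $C_{H_n}(a)=\{g\in H_n: ga=ag\}$. $[i]_a$ is the orbit of $i$ under $\langle\sigma_a\rangle$, $t_{[i]}(a)=\sum_{k\in[i]_a}t_k(a)$, $I(a)=\{i:t_{[i]}(a)\ne0\}$. For $i_1\in I(a)$, $m_1\in\mathbb{N}$: $X_{i,m}(a)=\{(i,m')\in X_n: m'\equiv m\bmod|t_{[i]}(a)|\}$, $X_{[i_1],m_1}(a)=\bigsqcup_{q=1}^{|[i_1]_a|}X_{i_q,m_q}(a)$ with $i_q=i_1\sigma_a^{q-1}$, $m_q=m_1+\sum_{d=1}^{q-1}t_{i_d}(a)$. Almost equal = finite symmetric difference. $\sim_a$ is the equivalence relation on $\{[k]_a:k\in I(a)\}$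 generated by $[i]_a\sim_a[j]_a$ whenever some $\langle a\rangle$-orbit is almost equal to $X_{[i],d}(a)\sqcup X_{[j],e}(a)$ for some $d,e\in\mathbb{N}$. *)

theory Defs
  imports Main "HOL-Combinatorics.Permutations"
begin

text \<open>Points of X_n are pairs (i,m) with 1 \<le> i \<le> n and m \<ge> 1 (positive naturals).
  Permutations act on the right: (x)g is written g x, so (x)(gh) = h (g x).\<close>

definition Xn :: "nat \<Rightarrow> (nat \<times> nat) set" where
  "Xn n = {1..n} \<times> {1..}"

definition Hn :: "nat \<Rightarrow> ((nat \<times> nat) \<Rightarrow> (nat \<times> nat)) set" where
  "Hn n = {g. bij_betw g (Xn n) (Xn n) \<and>
     (\<forall>i\<in>{1..n}. \<exists>z\<ge>1. \<exists>t::int. \<forall>m\<ge>z.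
        fst (g (i, m)) = i \<and> int (snd (g (i, m))) = int m + t)}"

definition tr :: "((nat \<times> nat) \<Rightarrow> (nat \<times> nat)) \<Rightarrow> nat \<Rightarrow> int" where
  "tr g i = (THE t. \<exists>z. \<forall>m\<ge>z. fst (g (i, m)) = i \<and> int (snd (g (i, m))) = int m + t)"

definition sact :: "(nat \<Rightarrow> nat) \<Rightarrow> (nat \<times> nat) \<Rightarrow> (nat \<times> nat)" where
  "sact \<sigma> x = (\<sigma> (fst x), snd x)"

text \<open>The element a = \<omega> \<sigma> of H_n \<rtimes> S_n (first \<omega>, then \<sigma>, right action).\<close>
definition semi :: "((nat \<times> nat) \<Rightarrow> (nat \<times> nat)) \<Rightarrow> (nat \<Rightarrow> nat) \<Rightarrow> (nat \<times> nat) \<Rightarrow> (nat \<times> nat)" where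
  "semi \<omega> \<sigma> x = sact \<sigma> (\<omega> x)"

definition orbS :: "(nat \<Rightarrow> nat) \<Rightarrow> nat \<Rightarrow> nat set" where
  "orbS \<sigma> i = {(\<sigma> ^^ k) i | k. True}"

text \<open>t_[i](a) = sum of t_k(a) = t_k(\<omega>_a) over k \<in> [i]_a.\<close>
definition tO :: "((nat \<times> nat) \<Rightarrow> (nat \<times> nat)) \<Rightarrow> (nat \<Rightarrow> nat) \<Rightarrow> nat \<Rightarrow> int" where
  "tO \<omega> \<sigma> i = (\<Sum>k\<in>orbS \<sigma> i. tr \<omega> k)"

definition Ia :: "nat \<Rightarrow> ((nat \<times> nat) \<Rightarrow> (nat \<times> nat)) \<Rightarrow> (nat \<Rightarrow> nat) \<Rightarrow> nat set" where
  "Ia n \<omega> \<sigma> = {i\<in>{1..n}. tO \<omega> \<sigma> i \<noteq> 0}"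

definition Xim :: "nat \<Rightarrow> ((nat \<times> nat) \<Rightarrow> (nat \<times> nat)) \<Rightarrow> (nat \<Rightarrow> nat) \<Rightarrow> nat \<Rightarrow> int \<Rightarrow> (nat \<times> nat) set" where
  "Xim n \<omega> \<sigma> i m = {(i', m') \<in> Xn n. i' = i \<and>
      int m' mod \<bar>tO \<omega> \<sigma> i\<bar> = m mod \<bar>tO \<omega> \<sigma> i\<bar>}"

definition XO :: "nat \<Rightarrow> ((nat \<times> nat) \<Rightarrow> (nat \<times> nat)) \<Rightarrow> (nat \<Rightarrow> nat) \<Rightarrow> nat \<Rightarrow> nat \<Rightarrow> (nat \<times> nat) set" where
  "XO n \<omega> \<sigma> i1 m1 = (\<Union>q\<in>{1..card (orbS \<sigma> i1)}.
      Xim n \<omega> \<sigma> ((\<sigma> ^^ (q - 1)) i1)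
        (int m1 + (\<Sum>d\<in>{1..<q}. tr \<omega> ((\<sigma> ^^ (d - 1)) i1))))"

text \<open>The \<langle>a\<rangle>-orbit of x in X_n (a a bijection of X_n; negative powers
  expressed via y a^k = x).\<close>
definition aorbit :: "nat \<Rightarrow> ((nat \<times> nat) \<Rightarrow> (nat \<times> nat)) \<Rightarrow> (nat \<times> nat) \<Rightarrow> (nat \<times> nat) set" where
  "aorbit n a x = {y\<in>Xn n. \<exists>k. (a ^^ k) x = y \<or> (a ^^ k) y = x}"

definition almost_equal :: "'a set \<Rightarrow> 'a set \<Rightarrow> bool" where
  "almost_equal A B \<longleftrightarrow> finite ((A - B) \<union> (B - A))"

definition simgen :: "nat \<Rightarrow> ((nat \<times> nat) \<Rightarrow> (nat \<times> nat)) \<Rightarrow> (nat \<Rightarrow> nat) \<Rightarrow> nat set \<Rightarrow> nat set \<Rightarrow> bool" where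
  "simgen n \<omega> \<sigma> A B \<longleftrightarrow> (\<exists>i j. i \<in> Ia n \<omega> \<sigma> \<and> j \<in> Ia n \<omega> \<sigma> \<and>
      A = orbS \<sigma> i \<and> B = orbS \<sigma> j \<and>
      (\<exists>x\<in>Xn n. \<exists>d\<ge>1. \<exists>e\<ge>1.
         XO n \<omega> \<sigma> i d \<inter> XO n \<omega> \<sigma> j e = {} \<and>
         almost_equal (aorbit n (semi \<omega> \<sigma>) x) (XO n \<omega> \<sigma> i d \<union> XO n \<omega> \<sigma> j e)))"

definition orbset :: "nat \<Rightarrow> ((nat \<times> nat) \<Rightarrow> (nat \<times> nat)) \<Rightarrow> (nat \<Rightarrow> nat) \<Rightarrow> nat set set" where
  "orbset n \<omega> \<sigma> = {orbS \<sigma> k | k. k \<in> Ia n \<omega> \<sigma>}"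

definition sim_a :: "nat \<Rightarrow> ((nat \<times> nat) \<Rightarrow> (nat \<times> nat)) \<Rightarrow> (nat \<Rightarrow> nat) \<Rightarrow> nat set \<Rightarrow> nat set \<Rightarrow> bool" where
  "sim_a n \<omega> \<sigma> A B \<longleftrightarrow> A \<in> orbset n \<omega> \<sigma> \<and> B \<in> orbset n \<omega> \<sigma> \<and>
     (\<lambda>X Y. X \<in> orbset n \<omega> \<sigma> \<and> Y \<in> orbset n \<omega> \<sigma> \<and>
        (simgen n \<omega> \<sigma> X Y \<or> simgen n \<omega> \<sigma> Y X))\<^sup>*\<^sup>* A B"

end

theory Submission
  imports Defs
begin

lemma tr_spec:
  assumes "g \<in> Hn n" "k \<in> {1..n}"
  shows "\<exists>z. \<forall>m\<ge>z. fst (g (k,m)) = k \<and> int (snd (g (k,m))) = int m + tr g k"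
proof -
  from assms obtain z t where h: "\<forall>m\<ge>z. fst (g (k,m)) = k \<and> int (snd (g (k,m))) = int m + t"
    unfolding Hn_def by blast
  have "tr g k = t" unfolding tr_def
  proof (rule the_equality)
    show "\<exists>z. \<forall>m\<ge>z. fst (g (k,m)) = k \<and> int (snd (g (k,m))) = int m + t" using h by blast
    fix t' assume "\<exists>z. \<forall>m\<ge>z. fst (g (k,m)) = k \<and> int (snd (g (k,m))) = int m + t'"
    then obtain z' where h': "\<forall>m\<ge>z'. fst (g (k,m)) = k \<and> int (snd (g (k,m))) = int m + t'" by blast
    from h[rule_format, of "max z z'"] h'[rule_format, of "max z z'"] show "t' = t" by simp
  qed
  with h show ?thesis by blast
qed

lemma fpow_in:
  assumes "\<forall>x\<in>Xn n. f x \<in> Xn n" "x \<in> Xn n"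
  shows "(f ^^ k) x \<in> Xn n"
  using assms by (induction k) auto

lemma fpow_inj:
  assumes "\<forall>x\<in>Xn n. f x \<in> Xn n" "inj_on f (Xn n)" "x \<in> Xn n" "y \<in> Xn n"
    "(f ^^ k) x = (f ^^ k) y"
  shows "x = y"
  using assms(5)
proof (induction k)
  case 0 then show ?case by simp
next
  case (Suc k)
  have "(f ^^ k) x = (f ^^ k) y"
    using Suc.prems fpow_in[OF assms(1) assms(3), of k] fpow_in[OF assms(1) assms(4), of k]
      assms(2) by (simp add: inj_on_def)
  then show ?case using Suc.IH by blast
qed

lemma gcomm_pow:
  assumes "\<forall>x\<in>Xn n. f x \<in> Xn n" "\<forall>x\<in>Xn n. g (f x) = f (g x)" "x \<in> Xn n"
  shows "g ((f ^^ k) x) = (f ^^ k) (g x)"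
proof (induction k)
  case 0 then show ?case by simp
next
  case (Suc k)
  have "g ((f ^^ Suc k) x) = g (f ((f ^^ k) x))" by simp
  also have "\<dots> = f (g ((f ^^ k) x))" using assms(2) fpow_in[OF assms(1) assms(3)] by blast
  finally show ?case using Suc.IH by simp
qed

lemma aorbit_rel:
  assumes "\<forall>x\<in>Xn n. f x \<in> Xn n" "inj_on f (Xn n)"
    "y \<in> aorbit n f x" "z \<in> aorbit n f x"
  shows "\<exists>k. (f ^^ k) y = z \<or> (f ^^ k) z = y"
proof -
  have yX: "y \<in> Xn n" and zX: "z \<in> Xn n" using assms(3,4) unfolding aorbit_def by auto
  obtain k where k: "(f ^^ k) x = z \<or> (f ^^ k) z = x" using assms(4) unfolding aorbit_def by auto
  obtain l where l: "(f ^^ l) x = y \<or> (f ^^ l) y = x" using assms(3) unfolding aorbit_def by auto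
  have add: "\<And>a b w. (f ^^ (a + b)) w = (f ^^ a) ((f ^^ b) w)" by (simp add: funpow_add)
  show ?thesis
  proof (cases "(f ^^ k) x = z")
    case kz: True
    show ?thesis
    proof (cases "(f ^^ l) x = y")
      case True
      show ?thesis
      proof (cases "l \<le> k")
        case True
        then have "(f ^^ (k - l)) y = z" using kz \<open>(f ^^ l) x = y\<close> add[of "k-l" l x] by simp
        then show ?thesis by blast
      next
        case False
        then have "(f ^^ (l - k)) z = y" using kz \<open>(f ^^ l) x = y\<close> add[of "l-k" k x] by simp
        then show ?thesis by blast
      qed
    next
      case False
      then have "(f ^^ l) y = x" using l by blast
      then have "(f ^^ (k + l)) y = z" using kz add[of k l y] by simp
      then show ?thesis by blast
    qed
  next
    case False
    then have kx: "(f ^^ k) z = x" using k by blast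
    show ?thesis
    proof (cases "(f ^^ l) x = y")
      case True
      then have "(f ^^ (l + k)) z = y" using kx add[of l k z] by simp
      then show ?thesis by blast
    next
      case False
      then have ly: "(f ^^ l) y = x" using l by blast
      show ?thesis
      proof (cases "k \<le> l")
        case True
        then have "(f ^^ k) ((f ^^ (l - k)) y) = (f ^^ k) z" using kx ly add[of k "l-k" y] by simp
        then have "(f ^^ (l - k)) y = z"
          using fpow_inj[OF assms(1,2) fpow_in[OF assms(1) yX] zX] by blast
        then show ?thesis by blast
      next
        case False
        then have "(f ^^ l) ((f ^^ (k - l)) z) = (f ^^ l) y" using kx ly add[of l "k-l" z] by simp
        then have "(f ^^ (k - l)) z = y"
          using fpow_inj[OF assms(1,2) fpow_in[OF assms(1) zX] yX] by blast
        then show ?thesis by blast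
      qed
    qed
  qed
qed

lemma fixall:
  assumes "\<forall>x\<in>Xn n. f x \<in> Xn n" "inj_on f (Xn n)" "\<forall>x\<in>Xn n. g x \<in> Xn n"
    "\<forall>x\<in>Xn n. g (f x) = f (g x)"
    "y \<in> aorbit n f x" "z \<in> aorbit n f x" "g y = y"
  shows "g z = z"
proof -
  have yX: "y \<in> Xn n" and zX: "z \<in> Xn n" using assms(5,6) unfolding aorbit_def by auto
  obtain k where "(f ^^ k) y = z \<or> (f ^^ k) z = y" using aorbit_rel[OF assms(1,2,5,6)] by blast
  then show ?thesis
  proof
    assume h: "(f ^^ k) y = z"
    then show ?thesis using gcomm_pow[OF assms(1,4) yX, of k] assms(7) by simp
  next
    assume h: "(f ^^ k) z = y"
    then have "(f ^^ k) (g z) = (f ^^ k) z" using gcomm_pow[OF assms(1,4) zX, of k] assms(7) by simp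
    then show ?thesis using fpow_inj[OF assms(1,2)] assms(3) zX by blast
  qed
qed


lemma tr_sigma:
  assumes om: "\<omega> \<in> Hn n" and sg: "\<sigma> permutes {1..n}" and g: "g \<in> Hn n"
    and comm: "\<forall>x\<in>Xn n. g (semi \<omega> \<sigma> x) = semi \<omega> \<sigma> (g x)"
    and k: "k \<in> {1..n}"
  shows "tr g (\<sigma> k) = tr g k"
proof -
  have sk: "\<sigma> k \<in> {1..n}" using permutes_in_image[OF sg] k by simp
  obtain z1 where z1: "\<forall>m\<ge>z1. fst (g (k,m)) = k \<and> int (snd (g (k,m))) = int m + tr g k"
    using tr_spec[OF g k] by blast
  obtain z2 where z2: "\<forall>m\<ge>z2. fst (\<omega> (k,m)) = k \<and> int (snd (\<omega> (k,m))) = int m + tr \<omega> k"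
    using tr_spec[OF om k] by blast
  obtain z3 where z3: "\<forall>m\<ge>z3. fst (g (\<sigma> k,m)) = \<sigma> k \<and> int (snd (g (\<sigma> k,m))) = int m + tr g (\<sigma> k)"
    using tr_spec[OF g sk] by blast
  define m where "m = 1 + z1 + z2 + z3 + nat \<bar>tr g k\<bar> + nat \<bar>tr \<omega> k\<bar>"
  have im: "int m = 1 + int z1 + int z2 + int z3 + \<bar>tr g k\<bar> + \<bar>tr \<omega> k\<bar>" unfolding m_def by simp
  have x: "(k,m) \<in> Xn n" using k unfolding Xn_def m_def by auto
  define m1 where "m1 = snd (g (k,m))"
  have g1: "fst (g (k,m)) = k" "int m1 = int m + tr g k" using z1[rule_format, of m] im unfolding m1_def by auto
  have "m1 \<ge> z2" using g1 im by linarith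
  then have w1: "fst (\<omega> (k,m1)) = k" "int (snd (\<omega> (k,m1))) = int m1 + tr \<omega> k" using z2 by auto
  have w2: "fst (\<omega> (k,m)) = k" "int (snd (\<omega> (k,m))) = int m + tr \<omega> k" using z2[rule_format, of m] im by auto
  have "snd (\<omega> (k,m)) \<ge> z3" using w2 im by linarith
  then have g3: "fst (g (\<sigma> k, snd (\<omega> (k,m)))) = \<sigma> k"
    "int (snd (g (\<sigma> k, snd (\<omega> (k,m))))) = int (snd (\<omega> (k,m))) + tr g (\<sigma> k)" using z3 by auto
  have "g (semi \<omega> \<sigma> (k,m)) = semi \<omega> \<sigma> (g (k,m))" using comm x by blast
  moreover have "semi \<omega> \<sigma> (k,m) = (\<sigma> k, snd (\<omega> (k,m)))" using w2 by (simp add: semi_def sact_def)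
  moreover have "g (k,m) = (k, m1)" using g1 unfolding m1_def by (metis prod.collapse)
  ultimately have "g (\<sigma> k, snd (\<omega> (k,m))) = sact \<sigma> (\<omega> (k,m1))" by (simp add: semi_def)
  then have "snd (g (\<sigma> k, snd (\<omega> (k,m)))) = snd (\<omega> (k,m1))" by (simp add: sact_def)
  then show ?thesis using g3 w1 w2 g1 by linarith
qed

lemma orb_in:
  assumes sg: "\<sigma> permutes {1..n}" and k: "k \<in> {1..n}"
  shows "(\<sigma> ^^ p) k \<in> {1..n}"
  by (induction p) (use k permutes_in_image[OF sg] in auto)

lemma tr_orb:
  assumes om: "\<omega> \<in> Hn n" and sg: "\<sigma> permutes {1..n}" and g: "g \<in> Hn n"
    and comm: "\<forall>x\<in>Xn n. g (semi \<omega> \<sigma> x) = semi \<omega> \<sigma> (g x)"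
    and k: "k \<in> {1..n}" and y: "y \<in> orbS \<sigma> k"
  shows "tr g y = tr g k"
proof -
  obtain p where p: "y = (\<sigma> ^^ p) k" using y unfolding orbS_def by auto
  have "tr g ((\<sigma> ^^ p) k) = tr g k"
  proof (induction p)
    case 0 then show ?case by simp
  next
    case (Suc p)
    then show ?case using tr_sigma[OF om sg g comm orb_in[OF sg k, of p]] by simp
  qed
  then show ?thesis using p by simp
qed

lemma Xim_sub_XO:
  assumes sg: "\<sigma> permutes {1..n}" and k: "k \<in> {1..n}"
  shows "Xim n \<omega> \<sigma> k (int d) \<subseteq> XO n \<omega> \<sigma> k d"
proof -
  have "orbS \<sigma> k \<subseteq> {1..n}" using orb_in[OF sg k] unfolding orbS_def by auto
  then have "finite (orbS \<sigma> k)" using finite_subset by blast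
  moreover have "k \<in> orbS \<sigma> k" unfolding orbS_def by (auto intro: exI[of _ 0])
  ultimately have "card (orbS \<sigma> k) \<ge> 1" by (metis One_nat_def Suc_leI card_gt_0_iff empty_iff)
  then show ?thesis 
  proof -
    have "Xim n \<omega> \<sigma> ((\<sigma> ^^ (1 - 1)) k) (int d + (\<Sum>e\<in>{1..<1}. tr \<omega> ((\<sigma> ^^ (e - 1)) k)))
       = Xim n \<omega> \<sigma> k (int d)" by simp
    moreover have "(1::nat) \<in> {1..card (orbS \<sigma> k)}" using \<open>card (orbS \<sigma> k) \<ge> 1\<close> by simp
    ultimately show ?thesis unfolding XO_def by blast
  qed
qed

lemma rowinf:
  assumes ae: "almost_equal Ob S" and sub: "Xim n \<omega> \<sigma> k (int d) \<subseteq> S"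
    and k: "k \<in> {1..n}" and t: "tO \<omega> \<sigma> k \<noteq> 0" and d: "d \<ge> 1"
  shows "\<exists>m\<ge>N. (k,m) \<in> Ob"
proof -
  define F where "F = Xim n \<omega> \<sigma> k (int d) - Ob"
  have "finite F" using ae sub unfolding almost_equal_def F_def
  proof -
    assume "finite (Ob - S \<union> (S - Ob))"
    then have "finite (S - Ob)" by simp
    moreover have "Xim n \<omega> \<sigma> k (int d) - Ob \<subseteq> S - Ob" using sub by blast
    ultimately show "finite (Xim n \<omega> \<sigma> k (int d) - Ob)" by (rule finite_subset[rotated])
  qed
  then have "finite (snd ` F)" by simp
  then obtain b where b: "\<forall>v\<in>snd ` F. v < b" using finite_nat_set_iff_bounded by blast
  define T where "T = nat \<bar>tO \<omega> \<sigma> k\<bar>"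
  have T1: "T \<ge> 1" using t unfolding T_def by simp
  have iT: "int T = \<bar>tO \<omega> \<sigma> k\<bar>" unfolding T_def by simp
  define m where "m = d + T * (b + N)"
  have mge: "m \<ge> b + N" unfolding m_def using T1 by (metis le_add2 mult_le_mono1 mult_1 order_trans)
  have "int m mod \<bar>tO \<omega> \<sigma> k\<bar> = int d mod \<bar>tO \<omega> \<sigma> k\<bar>"
    unfolding m_def by (simp add: iT[symmetric])
  moreover have "(k,m) \<in> Xn n" using k d unfolding Xn_def m_def by auto
  ultimately have "(k,m) \<in> Xim n \<omega> \<sigma> k (int d)" unfolding Xim_def by auto
  moreover have "(k,m) \<notin> F" using b mge by force
  ultimately have "(k,m) \<in> Ob" unfolding F_def by blast
  then show ?thesis using mge by (intro exI[of _ m]) auto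
qed


theorem lemma6p2:
  fixes n :: nat and \<omega> g :: "(nat \<times> nat) \<Rightarrow> (nat \<times> nat)" and \<sigma> :: "nat \<Rightarrow> nat"
    and i j :: nat
  assumes "n \<ge> 2"
    and "\<omega> \<in> Hn n" and "\<sigma> permutes {1..n}"
    and "g \<in> Hn n"
    and "\<forall>x\<in>Xn n. g (semi \<omega> \<sigma> x) = semi \<omega> \<sigma> (g x)"
    and "i \<in> Ia n \<omega> \<sigma>"
    and "tr g i \<noteq> 0"
    and "j \<in> Ia n \<omega> \<sigma>"
    and "sim_a n \<omega> \<sigma> (orbS \<sigma> j) (orbS \<sigma> i)"
  shows "tr g j \<noteq> 0"
proof
  assume tj: "tr g j = 0"
  note om = assms(2) and sg = assms(3) and g = assms(4) and comm = assms(5)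
  define a where "a = semi \<omega> \<sigma>"
  have aX: "\<forall>x\<in>Xn n. a x \<in> Xn n"
  proof
    fix x assume x: "x \<in> Xn n"
    have bo: "bij_betw \<omega> (Xn n) (Xn n)" using om unfolding Hn_def by blast
    have "\<omega> x \<in> Xn n" using bij_betwE[OF bo] x by blast
    then have f: "fst (\<omega> x) \<in> {1..n}" and s: "snd (\<omega> x) \<ge> 1" unfolding Xn_def by auto
    have "\<sigma> (fst (\<omega> x)) \<in> {1..n}" using permutes_in_image[OF sg] f by blast
    then show "a x \<in> Xn n" using s unfolding a_def semi_def sact_def Xn_def by simp
  qed
  have ainj: "inj_on a (Xn n)"
  proof (rule inj_onI)
    fix x y assume x: "x \<in> Xn n" and y: "y \<in> Xn n" and e: "a x = a y"
    have "\<sigma> (fst (\<omega> x)) = \<sigma> (fst (\<omega> y))" "snd (\<omega> x) = snd (\<omega> y)"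
      using e unfolding a_def semi_def sact_def by auto
    then have "\<omega> x = \<omega> y" using permutes_inj[OF sg] by (simp add: inj_eq prod_eq_iff)
    moreover have "inj_on \<omega> (Xn n)"
    proof -
      have "bij_betw \<omega> (Xn n) (Xn n)" using om unfolding Hn_def by blast
      then show ?thesis by (rule bij_betw_imp_inj_on)
    qed
    ultimately show "x = y" using x y by (meson inj_onD)
  qed
  have gX: "\<forall>x\<in>Xn n. g x \<in> Xn n"
  proof -
    have "bij_betw g (Xn n) (Xn n)" using g unfolding Hn_def by blast
    then show ?thesis using bij_betwE by blast
  qed
  have comm': "\<forall>x\<in>Xn n. g (a x) = a (g x)" using comm unfolding a_def .
  define Zs where "Zs A \<longleftrightarrow> (\<exists>k\<in>{1..n}. A = orbS \<sigma> k \<and> tr g k = 0)" for A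
  have self: "k \<in> orbS \<sigma> k" for k unfolding orbS_def by (auto intro: exI[of _ 0])
  have Zs_all: "tr g k = 0" if zs: "Zs A" "k \<in> {1..n}" "A = orbS \<sigma> k" for A k
  proof -
    obtain k0 where k0: "k0 \<in> {1..n}" "A = orbS \<sigma> k0" "tr g k0 = 0" using zs(1) unfolding Zs_def by blast
    have "k \<in> orbS \<sigma> k0" using self[of k] zs(3) k0(2) by simp
    then show ?thesis using tr_orb[OF om sg g comm k0(1)] k0(3) by simp
  qed
  have fixrow: "\<exists>y\<in>Ob. g y = y" if H: "tr g k = 0" "k \<in> {1..n}" "\<forall>N. \<exists>m\<ge>N. (k,m) \<in> Ob" for k Ob
  proof -
    obtain z where z: "\<forall>m\<ge>z. fst (g (k,m)) = k \<and> int (snd (g (k,m))) = int m + tr g k"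
      using tr_spec[OF g H(2)] by blast
    obtain m where m: "m \<ge> z" "(k,m) \<in> Ob" using H(3) by blast
    have "g (k,m) = (k,m)" using z[rule_format, OF m(1)] H(1) by (simp add: prod_eq_iff)
    then show ?thesis using m(2) by blast
  qed
  have rowfix: "tr g k = 0" if H: "\<forall>y\<in>Ob. g y = y" "k \<in> {1..n}" "\<forall>N. \<exists>m\<ge>N. (k,m) \<in> Ob" for k Ob
  proof -
    obtain z where z: "\<forall>m\<ge>z. fst (g (k,m)) = k \<and> int (snd (g (k,m))) = int m + tr g k"
      using tr_spec[OF g H(2)] by blast
    obtain m where m: "m \<ge> z" "(k,m) \<in> Ob" using H(3) by blast
    have "g (k,m) = (k,m)" using H(1) m(2) by blast
    then show ?thesis using z[rule_format, OF m(1)] by simp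
  qed
  have key: "Zs A \<longleftrightarrow> Zs B" if SG: "simgen n \<omega> \<sigma> A B" for A B
  proof -
    obtain i' j' x d e where w: "i' \<in> Ia n \<omega> \<sigma>" "j' \<in> Ia n \<omega> \<sigma>" "A = orbS \<sigma> i'" "B = orbS \<sigma> j'"
      "x \<in> Xn n" "d \<ge> 1" "e \<ge> 1"
      "almost_equal (aorbit n a x) (XO n \<omega> \<sigma> i' d \<union> XO n \<omega> \<sigma> j' e)"
      using SG unfolding simgen_def a_def by blast
    have i1: "i' \<in> {1..n}" "tO \<omega> \<sigma> i' \<noteq> 0" and j1: "j' \<in> {1..n}" "tO \<omega> \<sigma> j' \<noteq> 0"
      using w(1,2) unfolding Ia_def by auto
    have ri: "\<forall>N. \<exists>m\<ge>N. (i',m) \<in> aorbit n a x"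
      using rowinf[OF w(8) _ i1 w(6)] Xim_sub_XO[OF sg i1(1), of \<omega> d] by blast
    have rj: "\<forall>N. \<exists>m\<ge>N. (j',m) \<in> aorbit n a x"
      using rowinf[OF w(8) _ j1 w(7)] Xim_sub_XO[OF sg j1(1), of \<omega> e] by blast
    have allfix: "\<forall>y\<in>aorbit n a x. g y = y" if "\<exists>y\<in>aorbit n a x. g y = y"
      using fixall[OF aX ainj gX comm'] that by blast
    show ?thesis
    proof
      assume "Zs A"
      then have "tr g i' = 0" using Zs_all i1 w(3) by blast
      then have "\<exists>y\<in>aorbit n a x. g y = y" by (rule fixrow[OF _ i1(1) ri])
      then have "tr g j' = 0" by (rule rowfix[OF allfix j1(1) rj])
      then show "Zs B" unfolding Zs_def using w(4) j1(1) by blast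
    next
      assume "Zs B"
      then have "tr g j' = 0" using Zs_all j1 w(4) by blast
      then have "\<exists>y\<in>aorbit n a x. g y = y" by (rule fixrow[OF _ j1(1) rj])
      then have "tr g i' = 0" by (rule rowfix[OF allfix i1(1) ri])
      then show "Zs A" unfolding Zs_def using w(3) i1(1) by blast
    qed
  qed
  let ?R = "\<lambda>X Y. X \<in> orbset n \<omega> \<sigma> \<and> Y \<in> orbset n \<omega> \<sigma> \<and>
        (simgen n \<omega> \<sigma> X Y \<or> simgen n \<omega> \<sigma> Y X)"
  have chain: "?R\<^sup>*\<^sup>* (orbS \<sigma> j) (orbS \<sigma> i)" using assms(9) unfolding sim_a_def by blast
  have "Zs (orbS \<sigma> j) \<longleftrightarrow> Zs B" if "?R\<^sup>*\<^sup>* (orbS \<sigma> j) B" for B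
    using that
  proof (induction rule: rtranclp_induct)
    case base then show ?case by simp
  next
    case (step y z) then show ?case using key by blast
  qed
  from this[OF chain] have eq: "Zs (orbS \<sigma> j) \<longleftrightarrow> Zs (orbS \<sigma> i)" .
  have jn: "j \<in> {1..n}" and inn: "i \<in> {1..n}" using assms(6,8) unfolding Ia_def by auto
  have "Zs (orbS \<sigma> j)" unfolding Zs_def using jn tj by blast
  then have "tr g i = 0" using eq Zs_all inn by blast
  then show False using assms(7) by simp
qed

end
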